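(* Consider a two-player matrix game between a player $\mathrm{SV}$ (the group of surrounding vehicles) and a player $\mathrm{EV}$ (the ego vehicle). Player $\mathrm{SV}$ has exactly two actions $\pi_{\mathrm{SV}}^1$ (``Assert'') and $\pi_{\mathrm{SV}}^2$ (``Yield''); player $\mathrm{EV}$ has finitely many actions $\pi_{\mathrm{EV}}^1,\dots,\pi_{\mathrm{EV}}^{M_{\mathrm{EV}}}$. For each $i\in\{1,2\}$ and $m\in\{1,\dots,M_{\mathrm{EV}}\}$ let $J_{\mathrm{SV}}^{im}$ and $J_{\mathrm{EV}}^{im}$ be real numbers (the costs of $\mathrm{SV}$ and $\mathrm{EV}$ under the action tuple $(\pi_{\mathrm{SV}}^i,\pi_{\mathrm{EV}}^m)$). Let $b(\pi_{\mathrm{SV}}^1), b(\pi_{\mathrm{SV}}^2)\in[0,1]$ with $b(\pi_{\mathrm{SV}}^1)+b(\pi_{\mathrm{SV}}^2)=1$, and define the modified cost of $\mathrm{SV}$ by $\bar J_{\mathrm{SV}}^{im}:=(1-b(\pi_{\mathrm{SV}}^i))J_{\mathrm{SV}}^{im}$; the cost of $\mathrm{EV}$ is $J_{\mathrm{EV}}^{im}$. Assume that the inequalities $0\le J_{\mathrm{SV}}^{1m}\le J_{\mathrm{SV}}^{2m}$ and $J_{\mathrm{EV}}^{1m}\ge J_{\mathrm{EV}}^{2m}\ge 0$ hold for all $m\in\{1,\dots,M_{\mathrm{EV}}\}$ (for all feasible action tuples). If $b(\pi_{\mathrm{SV}}^1)\ge 0.5$, then there exists $p\in\{1,\dots,M_{\mathrm{EV}}\}$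 such that the action tuple $(\pi_{\mathrm{SV}}^1,\pi_{\mathrm{EV}}^p)$ is a pure-strategy Nash equilibrium, i.e. $\bar J_{\mathrm{SV}}^{1p}\le \bar J_{\mathrm{SV}}^{2p}$ and $J_{\mathrm{EV}}^{1p}\le J_{\mathrm{EV}}^{1m}$ for all $m\in\{1,\dots,M_{\mathrm{EV}}\}$.
   Context: An action tuple is called feasible if the corresponding simulated multi-vehicle trajectories are collision-free; it is assumed that at least one feasible action tuple exists. A pure-strategy Nash equilibrium is an action tuple from which no player can lower its own cost (modified cost $\bar J_{\mathrm{SV}}$ for $\mathrm{SV}$, $J_{\mathrm{EV}}$ for $\mathrm{EV}$) by unilaterally changing its action. The number $b(\pi_{\mathrm{SV}}^i)$ is the belief that the surrounding vehicles take action $\pi_{\mathrm{SV}}^i$. *)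

theory Defs
  imports Main "HOL.Real"
begin

text \<open>SV actions are indexed by i in {1,2} (1 = Assert, 2 = Yield);
EV actions by m in {1..M}. JSV i m, JEV i m are the costs under (pi_SV^i, pi_EV^m);
b i is the belief that SV takes action pi_SV^i.\<close>

definition modified_cost_SV :: "(nat \<Rightarrow> real) \<Rightarrow> (nat \<Rightarrow> nat \<Rightarrow> real) \<Rightarrow> nat \<Rightarrow> nat \<Rightarrow> real" where
  "modified_cost_SV b JSV i m = (1 - b i) * JSV i m"

definition pure_nash :: "nat \<Rightarrow> (nat \<Rightarrow> nat \<Rightarrow> real) \<Rightarrow> (nat \<Rightarrow> nat \<Rightarrow> real) \<Rightarrow> nat \<Rightarrow> nat \<Rightarrow> bool" where
  "pure_nash M JSVbar JEV i p \<longleftrightarrow>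
     i \<in> {1,2} \<and> p \<in> {1..M} \<and>
     (\<forall>i'\<in>{1,2}. JSVbar i p \<le> JSVbar i' p) \<and>
     (\<forall>m\<in>{1..M}. JEV i p \<le> JEV i m)"

end

theory Submission
  imports Defs
begin

theorem proposition1:
  fixes M :: nat and JSV JEV :: "nat \<Rightarrow> nat \<Rightarrow> real" and b :: "nat \<Rightarrow> real"
  assumes "M \<ge> 1"
    and "0 \<le> b 1" and "b 1 \<le> 1" and "0 \<le> b 2" and "b 2 \<le> 1" and "b 1 + b 2 = 1"
    and "\<forall>m\<in>{1..M}. 0 \<le> JSV 1 m \<and> JSV 1 m \<le> JSV 2 m"
    and "\<forall>m\<in>{1..M}. JEV 1 m \<ge> JEV 2 m \<and> JEV 2 m \<ge> 0"
    and "b 1 \<ge> 1/2"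
  shows "\<exists>p\<in>{1..M}. pure_nash M (modified_cost_SV b JSV) JEV 1 p"
proof -
  have ne: "JEV 1 ` {1..M} \<noteq> {}" using assms(1) by auto
  have "Min (JEV 1 ` {1..M}) \<in> JEV 1 ` {1..M}" using ne by (intro Min_in) auto
  then obtain p where p: "p \<in> {1..M}" "JEV 1 p = Min (JEV 1 ` {1..M})" by auto
  have minp: "\<forall>m\<in>{1..M}. JEV 1 p \<le> JEV 1 m" using p by auto
  have j: "0 \<le> JSV 1 p" "JSV 1 p \<le> JSV 2 p" using assms(7) p(1) by auto
  have "(1 - b 1) * JSV 1 p \<le> b 1 * JSV 1 p" using j assms(9) by (intro mult_right_mono) auto
  also have "\<dots> \<le> b 1 * JSV 2 p" using j assms(2) by (intro mult_left_mono) auto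
  finally have "(1 - b 1) * JSV 1 p \<le> (1 - b 2) * JSV 2 p" using assms(6) by (simp add: eq_diff_eq[symmetric])
  then show ?thesis using p(1) minp
    by (auto simp: pure_nash_def modified_cost_SV_def intro!: bexI[of _ p])
qed

end
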